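(* For every $\eta>0$ and every bounded measurable $f:\mathbb R^d\to\mathbb R$, $$\|\nabla\tilde{\mathcal P}_\eta f\|_\infty\le\|f\|_\infty(1+C_{\mathrm{op}}\eta)\|\sigma^{-1}\|^2_{\mathrm{op}}\|\sigma\|_{\mathrm{op}}\eta^{-1/2}d^{1/2},$$ so the chain $(\tilde X^\eta_k)_{k\in\mathbb N_0}$ is strong Feller. Furthermore, $(\tilde X^\eta_k)_{k\in\mathbb N_0}$ is irreducible (for all $x,y\in\mathbb R^d$, $r>0$ and $k\ge1$, $\tilde{\mathcal P}^k_\eta(x,B(y,r))>0$).
   Context: Fix $d\ge1$, $\alpha>0$, $\beta\in\mathbb R$, $p\in\mathbb R^d$ with nonnegative entries summing to $1$, $\mathrm e=(1,\dots,1)'$, positive rates $v$, a sub-stochastic matrix $P$ with $P_{ii}=0$ and $I-P$ invertible; $R=(I-P')\mathrm{diag}(v)$, assume $\mathrm e'R^{-1}p=1$, $\gamma=R^{-1}p$. $\sigma$ is a $d\times d$ matrix with $\sigma\sigma'=\mathrm{diag}(p)c_a^2+H^{(0)}+\sum_{k}\gamma_kv_kH^{(k)}+(I-P')\mathrm{diag}(v)\mathrm{diag}(\gamma)(I-P)$, $c_a^2>0$, $H^{(k)}_{ii}=P_{ki}(1-P_{ki})$, $H^{(k)}_{ij}=-P_{ki}P_{kj}$ ($i\ne j$), $H^{(0)}_{ii}=p_i(1-p_i)$, $H^{(0)}_{ij}=-p_ip_j$ ($i\ne j$), and $\xi'\sigma\sigma'\xi\ge c\,\xi'\xi$ for some $c>0$.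 $g(x)=-\beta p-Rx+(R-\alpha I)p(\mathrm e'x)^+$. The Euler–Maruyama chain is $\tilde X^\eta_{k+1}=\tilde X^\eta_k+g(\tilde X^\eta_k)\eta+\sqrt\eta\sigma\xi_{k+1}$ with i.i.d. standard Gaussian $\xi_k$; $\tilde{\mathcal P}_\eta(x,\cdot)$ is its one-step transition kernel, $\tilde{\mathcal P}_\eta f(x)=\int f(y)\tilde{\mathcal P}_\eta(x,\mathrm dy)$, $\tilde{\mathcal P}^k_\eta$ its $k$-step kernel; $B(y,r)$ is the closed ball. $C_{\mathrm{op}}=\|R\|_{\mathrm{op}}+\|(R-\alpha I)p\mathrm e'\|_{\mathrm{op}}$; $\|\cdot\|_{\mathrm{op}}$ is the operator norm. *)

theory Defs
  imports "HOL-Analysis.Analysis" "HOL-Probability.Probability"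
begin

definition diagm :: "real^'n \<Rightarrow> real^'n^'n" where
  "diagm v = (\<chi> i j. if i = j then v $ i else 0)"

definition onesv :: "real^'n" where
  "onesv = (\<chi> i. 1)"

definition outer :: "real^'n \<Rightarrow> real^'n \<Rightarrow> real^'n^'n" where
  "outer a b = (\<chi> i j. a $ i * b $ j)"

definition Rmat :: "real^'n^'n \<Rightarrow> real^'n \<Rightarrow> real^'n^'n" where
  "Rmat P v = (mat 1 - transpose P) ** diagm v"

definition Hk :: "real^'n^'n \<Rightarrow> 'n \<Rightarrow> real^'n^'n" where
  "Hk P k = (\<chi> i j. if i = j then P $ k $ i * (1 - P $ k $ i) else - (P $ k $ i * P $ k $ j))"

definition H0 :: "real^'n \<Rightarrow> real^'n^'n" where
  "H0 p = (\<chi> i j. if i = j then p $ i * (1 - p $ i) else - (p $ i * p $ j))"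

definition drift :: "real \<Rightarrow> real \<Rightarrow> real^'n \<Rightarrow> real^'n^'n \<Rightarrow> real^'n \<Rightarrow> real^'n" where
  "drift \<alpha> \<beta> p R x = - (\<beta> *\<^sub>R p) - R *v x + max 0 (onesv \<bullet> x) *\<^sub>R ((R - mat \<alpha>) *v p)"

definition std_gauss :: "(real^'n) measure" where
  "std_gauss = density lborel (\<lambda>z. ennreal (\<Prod>i\<in>UNIV. std_normal_density (z $ i)))"

text \<open>One-step transition operator of the Euler--Maruyama chain:
  (P_eta f)(x) = E f(x + g(x) eta + sqrt eta sigma xi).\<close>
definition EM_op :: "real \<Rightarrow> real \<Rightarrow> real \<Rightarrow> real^'n \<Rightarrow> real^'n^'n \<Rightarrow> real^'n^'n
    \<Rightarrow> (real^'n \<Rightarrow> real) \<Rightarrow> real^'n \<Rightarrow> real" where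
  "EM_op \<eta> \<alpha> \<beta> p R \<sigma> f x =
     (\<integral>z. f (x + \<eta> *\<^sub>R drift \<alpha> \<beta> p R x + sqrt \<eta> *\<^sub>R (\<sigma> *v z)) \<partial>std_gauss)"

definition supnorm :: "('a \<Rightarrow> real) \<Rightarrow> real" where
  "supnorm f = (SUP x. \<bar>f x\<bar>)"

definition opnorm :: "real^'n^'m \<Rightarrow> real" where
  "opnorm A = onorm (\<lambda>x. A *v x)"

end

theory Submission imports Defs begin

lemma snd_deriv: "(std_normal_density has_real_derivative (- x * std_normal_density x)) (at x within S)"
proof -
  have s: "sqrt (2*pi) * sqrt (2*pi) = 2 * pi" by simp
  show ?thesis
  unfolding std_normal_density_def[abs_def]
  apply (rule derivative_eq_intros refl | simp)+
  done
qed

lemma snd_cont: "continuous_on S std_normal_density"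
  unfolding std_normal_density_def[abs_def] by (auto intro!: continuous_intros)

lemma ftc_bound:
  fixes a b :: real assumes ab: "a \<le> b"
  shows "ennreal \<bar>std_normal_density b - std_normal_density a\<bar>
     \<le> (\<integral>\<^sup>+t. ennreal (indicator {a..b} t * \<bar>t * std_normal_density t\<bar>) \<partial>lborel)"
proof -
  let ?f = "\<lambda>t. - t * std_normal_density t"
  have c: "continuous_on {a..b} ?f" by (intro continuous_intros snd_cont)
  have I: "integral\<^sup>L lborel (\<lambda>x. indicator {a .. b} x *\<^sub>R ?f x) = std_normal_density b - std_normal_density a"
    apply (rule integral_FTC_atLeastAtMost[OF ab _ c])
    using snd_deriv by (simp add: has_real_derivative_iff_has_vector_derivative)
  have int: "integrable lborel (\<lambda>x. indicator {a .. b} x *\<^sub>R ?f x)"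
    using borel_integrable_atLeastAtMost'[OF c] unfolding set_integrable_def .
  have "norm (integral\<^sup>L lborel (\<lambda>x. indicator {a .. b} x *\<^sub>R ?f x))
     \<le> (\<integral>\<^sup>+x. norm (indicator {a .. b} x *\<^sub>R ?f x) \<partial>lborel)"
    by (rule integral_norm_bound_ennreal[OF int])
  also have "\<dots> = (\<integral>\<^sup>+t. ennreal (indicator {a..b} t * \<bar>t * std_normal_density t\<bar>) \<partial>lborel)"
    by (intro nn_integral_cong) (auto simp: indicator_def abs_mult)
  finally have "ennreal (norm (integral\<^sup>L lborel (\<lambda>x. indicator {a .. b} x *\<^sub>R ?f x))) \<le> (\<integral>\<^sup>+t. ennreal (indicator {a..b} t * \<bar>t * std_normal_density t\<bar>) \<partial>lborel)" .
  then show ?thesis unfolding I by simp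
qed

lemma snd_shift_L1:
  fixes a :: real
  shows "(\<integral>\<^sup>+s. ennreal \<bar>std_normal_density (s - a) - std_normal_density s\<bar> \<partial>lborel)
     \<le> ennreal (\<bar>a\<bar> * sqrt (2 / pi))"
proof -
  let ?h = "\<lambda>t. \<bar>t * std_normal_density t\<bar>"
  have hm[measurable]: "?h \<in> borel_measurable borel"
    by (intro borel_measurable_continuous_onI continuous_intros snd_cont)
  have "(\<integral>\<^sup>+s. ennreal \<bar>std_normal_density (s - a) - std_normal_density s\<bar> \<partial>lborel)
     \<le> (\<integral>\<^sup>+s. (\<integral>\<^sup>+t. ennreal (indicator {min (s-a) s..max (s-a) s} t * ?h t) \<partial>lborel) \<partial>lborel)"
  proof (intro nn_integral_mono)
    fix s
    have "\<bar>std_normal_density (s - a) - std_normal_density s\<bar>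
        = \<bar>std_normal_density (max (s-a) s) - std_normal_density (min (s-a) s)\<bar>"
      by (cases "a \<ge> 0") (auto simp: min_def max_def)
    then show "ennreal \<bar>std_normal_density (s - a) - std_normal_density s\<bar>
     \<le> (\<integral>\<^sup>+t. ennreal (indicator {min (s-a) s..max (s-a) s} t * ?h t) \<partial>lborel)"
      using ftc_bound[of "min (s-a) s" "max (s-a) s"] by simp
  qed
  also have "\<dots> = (\<integral>\<^sup>+s. (\<integral>\<^sup>+t. ennreal (indicator {min t (t+a)..max t (t+a)} s * ?h t) \<partial>lborel) \<partial>lborel)"
    by (intro nn_integral_cong) (auto simp: indicator_def min_def max_def)
  also have "\<dots> = (\<integral>\<^sup>+t. (\<integral>\<^sup>+s. ennreal (indicator {min t (t+a)..max t (t+a)} s * ?h t) \<partial>lborel) \<partial>lborel)"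
  proof (rule lborel_pair.Fubini')
    have m1: "(\<lambda>x. ?h (fst x)) \<in> borel_measurable (lborel \<Otimes>\<^sub>M lborel)"
      by (rule measurable_compose[OF measurable_fst]) simp
    have m2: "Measurable.pred (lborel \<Otimes>\<^sub>M lborel) (\<lambda>x. min (fst x) (fst x + a) \<le> snd x \<and> snd x \<le> max (fst x) (fst x + a))"
      by measurable
    show "(\<lambda>(t, s). ennreal (indicator {min t (t+a)..max t (t+a)} s * ?h t)) \<in> borel_measurable (lborel \<Otimes>\<^sub>M lborel)"
      unfolding indicator_def atLeastAtMost_iff case_prod_beta using m1 m2 by measurable
  qed
  also have "\<dots> = (\<integral>\<^sup>+t. ennreal (?h t) * ennreal \<bar>a\<bar> \<partial>lborel)"
  proof (intro nn_integral_cong)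
    fix t
    have "(\<integral>\<^sup>+s. ennreal (indicator {min t (t+a)..max t (t+a)} s * ?h t) \<partial>lborel)
        = (\<integral>\<^sup>+s. ennreal (?h t) * indicator {min t (t+a)..max t (t+a)} s \<partial>lborel)"
      by (intro nn_integral_cong) (auto simp: indicator_def)
    also have "\<dots> = ennreal (?h t) * emeasure lborel {min t (t+a)..max t (t+a)}"
      by (simp add: nn_integral_cmult_indicator)
    also have "\<dots> = ennreal (?h t) * ennreal \<bar>a\<bar>"
      by (cases "a \<ge> 0") (auto simp: min_def max_def)
    finally show "(\<integral>\<^sup>+s. ennreal (indicator {min t (t+a)..max t (t+a)} s * ?h t) \<partial>lborel) = ennreal (?h t) * ennreal \<bar>a\<bar>" .
  qed
  also have "\<dots> = (\<integral>\<^sup>+t. ennreal (?h t) \<partial>lborel) * ennreal \<bar>a\<bar>"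
    by (simp add: nn_integral_multc)
  also have "(\<integral>\<^sup>+t. ennreal (?h t) \<partial>lborel) = ennreal (sqrt (2/pi))"
  proof -
    have "has_bochner_integral lborel (\<lambda>x. std_normal_density x * \<bar>x\<bar>^(2 * 0 + 1)) (sqrt (2/pi) * 2^0 * fact 0)"
      by (rule std_normal_moment_abs_odd)
    then have hb: "has_bochner_integral lborel ?h (sqrt (2/pi))"
      by (simp add: abs_mult mult.commute)
    have "(\<integral>\<^sup>+t. ennreal (?h t) \<partial>lborel) = ennreal (integral\<^sup>L lborel ?h)"
      using integrable.intros[OF hb] by (intro nn_integral_eq_integral) auto
    then show ?thesis using hb by (simp add: has_bochner_integral_integral_eq)
  qed
  finally show ?thesis by (simp add: ennreal_mult' mult.commute)
qed


definition gdens :: "real^'n \<Rightarrow> real" where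
  "gdens z = (\<Prod>i\<in>UNIV. std_normal_density (z $ i))"

lemma gdens_pos: "gdens z > 0"
  unfolding gdens_def by (intro prod_pos) (auto simp: std_normal_density_def)

lemma gdens_cont: "continuous_on S gdens"
  unfolding gdens_def[abs_def] by (intro continuous_intros continuous_on_compose2[OF snd_cont]) auto

lemma gdens_meas[measurable]: "gdens \<in> borel_measurable borel"
  by (intro borel_measurable_continuous_onI gdens_cont)

lemma prod_vec_Basis:
  fixes z :: "real^'n"
  shows "(\<Prod>i\<in>UNIV. h i (z $ i)) = (\<Prod>b\<in>Basis. h (axis_index b) (z \<bullet> b))"
proof -
  have B: "(Basis :: (real^'n) set) = (\<lambda>i. axis i 1) ` UNIV"
    unfolding Basis_vec_def by auto
  have inj: "inj (\<lambda>i. axis i (1::real) :: real^'n)"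
    by (auto intro!: injI simp: axis_eq_axis)
  show ?thesis unfolding B by (subst prod.reindex[OF inj]) (simp add: inner_axis)
qed

lemma nn_integral_prod_vec:
  fixes h :: "'n::finite \<Rightarrow> real \<Rightarrow> real"
  assumes [measurable]: "\<And>i. h i \<in> borel_measurable borel" and nn: "\<And>i x. 0 \<le> h i x"
  shows "(\<integral>\<^sup>+z. ennreal (\<Prod>i\<in>UNIV. h i ((z::real^'n) $ i)) \<partial>lborel) = (\<Prod>i\<in>UNIV. \<integral>\<^sup>+x. ennreal (h i x) \<partial>lborel)"
proof -
  have "(\<integral>\<^sup>+z. ennreal (\<Prod>i\<in>UNIV. h i ((z::real^'n) $ i)) \<partial>lborel)
      = (\<integral>\<^sup>+z. (\<Prod>b\<in>(Basis::(real^'n) set). (\<lambda>b x. ennreal (h (axis_index b) x)) b (z \<bullet> b)) \<partial>lborel)"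
    by (simp add: prod_vec_Basis prod_ennreal nn prod_nonneg)
  also have "\<dots> = (\<Prod>b\<in>(Basis::(real^'n) set). \<integral>\<^sup>+x. ennreal (h (axis_index b) x) \<partial>lborel)"
    by (rule nn_integral_lborel_prod) (auto simp: nn)
  also have "\<dots> = (\<Prod>i\<in>UNIV. \<integral>\<^sup>+x. ennreal (h i x) \<partial>lborel)"
  proof -
    have B: "(Basis :: (real^'n) set) = (\<lambda>i. axis i 1) ` UNIV"
      unfolding Basis_vec_def by auto
    have inj: "inj (\<lambda>i. axis i (1::real) :: real^'n)"
      by (auto intro!: injI simp: axis_eq_axis)
    show ?thesis unfolding B by (subst prod.reindex[OF inj]) simp
  qed
  finally show ?thesis .
qed

lemma nn_integral_snd: "(\<integral>\<^sup>+x. ennreal (std_normal_density x) \<partial>lborel) = 1"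
  by (subst nn_integral_eq_integral) auto

lemma nn_integral_gdens: "(\<integral>\<^sup>+z. ennreal (gdens (z::real^'n)) \<partial>lborel) = 1"
  unfolding gdens_def
  by (subst nn_integral_prod_vec) (auto simp: nn_integral_snd)

lemma prob_space_std_gauss: "prob_space (std_gauss :: (real^'n) measure)"
proof
  have "emeasure (std_gauss :: (real^'n) measure) (space std_gauss) = (\<integral>\<^sup>+z. ennreal (gdens (z::real^'n)) \<partial>lborel)"
    unfolding std_gauss_def gdens_def by (simp add: emeasure_density)
  then show "emeasure (std_gauss :: (real^'n) measure) (space std_gauss) = 1"
    by (simp add: nn_integral_gdens)
qed

lemma std_gauss_eq: "(std_gauss :: (real^'n) measure) = density lborel (\<lambda>z. ennreal (gdens z))"
  unfolding std_gauss_def gdens_def ..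

lemma integrable_gdens: "integrable lborel (gdens :: real^'n \<Rightarrow> real)"
  by (rule integrableI_nonneg) (auto simp: nn_integral_gdens less_imp_le[OF gdens_pos])

lemma nn_integral_translate:
  fixes F :: "'a::euclidean_space \<Rightarrow> ennreal"
  assumes [measurable]: "F \<in> borel_measurable borel"
  shows "(\<integral>\<^sup>+u. F (u + c) \<partial>lborel) = (\<integral>\<^sup>+u. F u \<partial>lborel)"
proof -
  have "(\<integral>\<^sup>+u. F u \<partial>lborel) = (\<integral>\<^sup>+u. F u \<partial>(distr lborel borel ((+) c)))"
    by (simp add: lborel_distr_plus)
  also have "\<dots> = (\<integral>\<^sup>+u. F (c + u) \<partial>lborel)"
    by (subst nn_integral_distr) auto
  finally show ?thesis by (simp add: add.commute)
qed

lemma integral_translate: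
  fixes F :: "'a::euclidean_space \<Rightarrow> real"
  assumes [measurable]: "F \<in> borel_measurable borel"
  shows "(\<integral>u. F (u + c) \<partial>lborel) = (\<integral>u. F u \<partial>lborel)"
proof -
  have "(\<integral>u. F u \<partial>lborel) = (\<integral>u. F u \<partial>(distr lborel borel ((+) c)))"
    by (simp add: lborel_distr_plus)
  also have "\<dots> = (\<integral>u. F (c + u) \<partial>lborel)"
    by (subst integral_distr) auto
  finally show ?thesis by (simp add: add.commute)
qed

definition Kn :: "real^'n \<Rightarrow> ennreal" where
  "Kn d = (\<integral>\<^sup>+u. ennreal \<bar>gdens (u - d) - gdens u\<bar> \<partial>lborel)"

lemma Kn_0: "Kn 0 = 0"
  unfolding Kn_def by simp

lemma Kn_add: "Kn (a + b) \<le> Kn a + Kn b"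
proof -
  have "Kn (a + b) \<le> (\<integral>\<^sup>+u. ennreal \<bar>gdens (u - a - b) - gdens (u - a)\<bar> + ennreal \<bar>gdens (u - a) - gdens u\<bar> \<partial>lborel)"
    unfolding Kn_def
    by (intro nn_integral_mono) (auto simp: ennreal_plus[symmetric] diff_diff_eq simp del: ennreal_plus)
  also have "\<dots> = (\<integral>\<^sup>+u. ennreal \<bar>gdens (u - a - b) - gdens (u - a)\<bar> \<partial>lborel) + Kn a"
    unfolding Kn_def by (rule nn_integral_add) auto
  also have "(\<integral>\<^sup>+u. ennreal \<bar>gdens (u - a - b) - gdens (u - a)\<bar> \<partial>lborel) = Kn b"
    unfolding Kn_def
    using nn_integral_translate[of "\<lambda>u. ennreal \<bar>gdens (u - b) - gdens u\<bar>" "- a"]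
    by simp
  finally show ?thesis by (simp add: add.commute)
qed

lemma Kn_sum: "finite S \<Longrightarrow> Kn (\<Sum>i\<in>S. x i) \<le> (\<Sum>i\<in>S. Kn (x i))"
proof (induction S rule: finite_induct)
  case empty then show ?case by (simp add: Kn_0)
next
  case (insert j S)
  then show ?case using Kn_add[of "x j" "sum x S"]
    by (simp add: add_left_mono order_trans)
qed

lemma Kn_axis: "Kn (axis i a :: real^'n) \<le> ennreal (\<bar>a\<bar> * sqrt (2 / pi))"
proof -
  let ?h = "\<lambda>j s. if j = i then \<bar>std_normal_density (s - a) - std_normal_density s\<bar> else std_normal_density s"
  have eq: "\<bar>gdens (u - axis i a) - gdens u\<bar> = (\<Prod>j\<in>UNIV. ?h j (u $ j))" for u :: "real^'n"
  proof -
    have "gdens (u - axis i a) - gdens u = (std_normal_density (u$i - a) - std_normal_density (u$i)) * (\<Prod>j\<in>UNIV - {i}. std_normal_density (u $ j))"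
      unfolding gdens_def
      by (subst (1 2) prod.remove[of UNIV i]) (auto simp: algebra_simps axis_def intro!: prod.cong)
    also have "\<bar>\<dots>\<bar> = (\<Prod>j\<in>UNIV. ?h j (u $ j))"
      by (subst prod.remove[of UNIV i]) (auto simp: abs_mult prod_nonneg abs_of_nonneg intro!: prod.cong)
    finally show ?thesis .
  qed
  have m: "?h j \<in> borel_measurable borel" for j
    by (cases "j = i") (auto intro!: borel_measurable_continuous_onI continuous_intros continuous_on_compose2[OF snd_cont])
  have "Kn (axis i a :: real^'n) = (\<Prod>j\<in>UNIV. \<integral>\<^sup>+x. ennreal (?h j x) \<partial>lborel)"
    unfolding Kn_def eq by (rule nn_integral_prod_vec[OF m]) auto
  also have "\<dots> = (\<integral>\<^sup>+x. ennreal (?h i x) \<partial>lborel) * (\<Prod>j\<in>UNIV - {i}. \<integral>\<^sup>+x. ennreal (?h j x) \<partial>lborel)"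
    by (subst prod.remove[of UNIV i]) auto
  also have "(\<Prod>j\<in>UNIV - {i}. \<integral>\<^sup>+x. ennreal (?h j x) \<partial>lborel) = 1"
    by (intro prod.neutral) (auto simp: nn_integral_snd)
  finally show ?thesis using snd_shift_L1[of a] by simp
qed

lemma sum_abs_le_sqrt_card: "(\<Sum>i\<in>UNIV. \<bar>d $ i\<bar>) \<le> sqrt (real CARD('n)) * norm (d :: real^'n)"
proof -
  have "(\<Sum>i\<in>UNIV. \<bar>d $ i\<bar>) = (\<Sum>i\<in>UNIV. \<bar>\<bar>d $ i\<bar>\<bar> * \<bar>(\<lambda>_. 1::real) i\<bar>)" by simp
  also have "\<dots> \<le> L2_set (\<lambda>i. \<bar>d $ i\<bar>) UNIV * L2_set (\<lambda>_. 1::real) (UNIV :: 'n set)"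
    using L2_set_mult_ineq[of "\<lambda>i. \<bar>d $ i\<bar>" "\<lambda>_. 1::real" "UNIV :: 'n set"] by simp
  also have "\<dots> = norm d * sqrt (real CARD('n))"
    by (simp add: norm_vec_def L2_set_constant)
  finally show ?thesis by (simp add: mult.commute)
qed

lemma Kn_bound: "Kn (d :: real^'n) \<le> ennreal (sqrt (real CARD('n)) * norm d)"
proof -
  have dsum: "d = (\<Sum>i\<in>UNIV. axis i (d $ i))"
    by (simp add: vec_eq_iff sum_component axis_def)
  have "Kn d \<le> (\<Sum>i\<in>UNIV. Kn (axis i (d $ i)))"
    by (subst dsum) (rule Kn_sum, simp)
  also have "\<dots> \<le> (\<Sum>i\<in>UNIV. ennreal (\<bar>d $ i\<bar> * sqrt (2 / pi)))"
    by (intro sum_mono Kn_axis)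
  also have "\<dots> = ennreal (\<Sum>i\<in>UNIV. \<bar>d $ i\<bar> * sqrt (2 / pi))"
    by (simp add: sum_ennreal)
  also have "\<dots> \<le> ennreal (sqrt (real CARD('n)) * norm d)"
  proof (intro ennreal_leI)
    have "sqrt (2 / pi) \<le> 1" using pi_gt3 by simp
    then have "(\<Sum>i\<in>UNIV. \<bar>d $ i\<bar> * sqrt (2 / pi)) \<le> (\<Sum>i\<in>UNIV. \<bar>d $ i\<bar>)"
      by (intro sum_mono) (simp add: mult_left_le)
    then show "(\<Sum>i\<in>UNIV. \<bar>d $ i\<bar> * sqrt (2 / pi)) \<le> sqrt (real CARD('n)) * norm d"
      using sum_abs_le_sqrt_card[of d] by linarith
  qed
  finally show ?thesis .
qed


lemma LipG:
  fixes F :: "real^'n \<Rightarrow> real"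
  assumes Fm[measurable]: "F \<in> borel_measurable borel" and B: "\<forall>z. \<bar>F z\<bar> \<le> B"
  shows "\<bar>(\<integral>z. F (z + d) \<partial>std_gauss) - (\<integral>z. F z \<partial>std_gauss)\<bar> \<le> B * sqrt (real CARD('n)) * norm d"
proof -
  have B0: "0 \<le> B" using B[rule_format, of 0] by linarith
  have i1: "integrable lborel (\<lambda>u. gdens (u - e))" for e :: "real^'n"
  proof (rule integrableI_nonneg)
    show "(\<lambda>u. gdens (u - e)) \<in> borel_measurable lborel" by measurable
    show "AE x in lborel. 0 \<le> gdens (x - e)" using gdens_pos less_imp_le by auto
    have "(\<integral>\<^sup>+u. ennreal (gdens (u - e)) \<partial>lborel) = 1"
      using nn_integral_translate[of "\<lambda>u. ennreal (gdens u)" "- e"] nn_integral_gdens by simp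
    then show "(\<integral>\<^sup>+u. ennreal (gdens (u - e)) \<partial>lborel) < \<infinity>" by simp
  qed
  have i2: "integrable lborel (\<lambda>u. gdens (u - e) * F u)" for e :: "real^'n"
  proof (rule Bochner_Integration.integrable_bound[where f="\<lambda>u. B * gdens (u - e)"])
    show "integrable lborel (\<lambda>u. B * gdens (u - e))" using i1 by simp
    show "(\<lambda>u. gdens (u - e) * F u) \<in> borel_measurable lborel" by measurable
    show "AE x in lborel. norm (gdens (x - e) * F x) \<le> norm (B * gdens (x - e))"
      using B B0 gdens_pos[of "_ - e"]
      by (auto simp: abs_mult mult.commute intro!: mult_right_mono)
  qed
  have e1: "(\<integral>z. F (z + d) \<partial>std_gauss) = (\<integral>u. gdens (u - d) * F u \<partial>lborel)"
  proof -
    have "(\<integral>z. F (z + d) \<partial>std_gauss) = (\<integral>u. gdens u * F (u + d) \<partial>lborel)"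
      unfolding std_gauss_eq
      by (subst integral_density) (auto simp: less_imp_le[OF gdens_pos])
    also have "\<dots> = (\<integral>u. gdens (u - d) * F u \<partial>lborel)"
      using integral_translate[of "\<lambda>u. gdens (u - d) * F u" d] by simp
    finally show ?thesis .
  qed
  have e2: "(\<integral>z. F z \<partial>std_gauss) = (\<integral>u. gdens (u - 0) * F u \<partial>lborel)"
    unfolding std_gauss_eq
    by (subst integral_density) (auto simp: less_imp_le[OF gdens_pos])
  have "(\<integral>z. F (z + d) \<partial>std_gauss) - (\<integral>z. F z \<partial>std_gauss)
      = (\<integral>u. (gdens (u - d) - gdens u) * F u \<partial>lborel)"
    unfolding e1 e2 using i2[of d] i2[of 0]
    by (subst Bochner_Integration.integral_diff[symmetric]) (auto simp: left_diff_distrib)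
  then have "ennreal \<bar>(\<integral>z. F (z + d) \<partial>std_gauss) - (\<integral>z. F z \<partial>std_gauss)\<bar>
      = ennreal (norm (\<integral>u. (gdens (u - d) - gdens u) * F u \<partial>lborel))" by simp
  also have "\<dots> \<le> (\<integral>\<^sup>+u. norm ((gdens (u - d) - gdens u) * F u) \<partial>lborel)"
    using i2[of d] i2[of 0]
    by (intro integral_norm_bound_ennreal) (auto simp: left_diff_distrib)
  also have "\<dots> \<le> (\<integral>\<^sup>+u. ennreal B * ennreal \<bar>gdens (u - d) - gdens u\<bar> \<partial>lborel)"
    using B B0
    by (intro nn_integral_mono) (auto simp: abs_mult ennreal_mult[symmetric] mult.commute intro!: mult_right_mono)
  also have "\<dots> = ennreal B * Kn d"
    unfolding Kn_def by (rule nn_integral_cmult) measurable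
  also have "\<dots> \<le> ennreal B * ennreal (sqrt (real CARD('n)) * norm d)"
    by (intro mult_left_mono Kn_bound) auto
  also have "\<dots> = ennreal (B * sqrt (real CARD('n)) * norm d)"
    using B0 by (simp add: ennreal_mult mult.assoc)
  finally show ?thesis
    using B0 by (subst (asm) ennreal_le_iff) auto
qed


lemma matrix_inv_props:
  fixes A :: "real^'n^'n"
  assumes "invertible A"
  shows "A ** matrix_inv A = mat 1" "matrix_inv A ** A = mat 1"
proof -
  have "A ** matrix_inv A = mat 1 \<and> matrix_inv A ** A = mat 1"
    using assms unfolding invertible_def matrix_inv_def by (rule someI_ex)
  then show "A ** matrix_inv A = mat 1" "matrix_inv A ** A = mat 1" by auto
qed

lemma pd_invertible:
  fixes \<sigma> :: "real^'n^'n"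
  assumes "\<exists>c>0. \<forall>\<xi>. \<xi> \<bullet> ((\<sigma> ** transpose \<sigma>) *v \<xi>) \<ge> c * (\<xi> \<bullet> \<xi>)"
  shows "invertible \<sigma>"
proof -
  obtain c where c: "c > 0" "\<forall>\<xi>. \<xi> \<bullet> ((\<sigma> ** transpose \<sigma>) *v \<xi>) \<ge> c * (\<xi> \<bullet> \<xi>)" using assms by auto
  have "\<forall>x. transpose \<sigma> *v x = 0 \<longrightarrow> x = 0"
  proof (intro allI impI)
    fix x :: "real^'n" assume "transpose \<sigma> *v x = 0"
    then have "(\<sigma> ** transpose \<sigma>) *v x = 0" by (simp add: matrix_vector_mul_assoc[symmetric])
    then have "c * (x \<bullet> x) \<le> 0" using c(2)[rule_format, of x] by simp
    then have "x \<bullet> x \<le> 0" using c(1) by (simp add: mult_le_0_iff)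
    then show "x = 0" by (metis inner_ge_zero inner_eq_zero_iff order_antisym)
  qed
  then have "invertible (transpose \<sigma>)"
    by (simp add: invertible_left_inverse matrix_left_invertible_ker)
  then show ?thesis using transpose_invertible[of "transpose \<sigma>"] by simp
qed

lemma opnorm_bound: "norm (A *v x) \<le> opnorm A * norm x"
  unfolding opnorm_def by (rule onorm) simp

lemma opnorm_nonneg: "0 \<le> opnorm A"
  unfolding opnorm_def by (rule onorm_pos_le) simp

lemma outer_mult: "((M :: real^'n^'n) ** outer p onesv) *v w = (onesv \<bullet> w) *\<^sub>R (M *v p)"
proof -
  have "outer p onesv *v w = (onesv \<bullet> w) *\<^sub>R p"
    by (simp add: vec_eq_iff matrix_vector_mult_def outer_def onesv_def inner_vec_def sum_distrib_left mult.commute)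
  then show ?thesis by (simp add: matrix_vector_mul_assoc[symmetric] matrix_vector_mult_scaleR)
qed

lemma drift_lip:
  fixes R :: "real^'n^'n"
  shows "norm (drift \<alpha> \<beta> p R x - drift \<alpha> \<beta> p R y)
    \<le> (opnorm R + opnorm ((R - mat \<alpha>) ** outer p onesv)) * norm (x - y)"
proof -
  let ?M = "(R - mat \<alpha>) ** outer p onesv"
  have eq: "drift \<alpha> \<beta> p R x - drift \<alpha> \<beta> p R y
     = - (R *v (x - y)) + (max 0 (onesv \<bullet> x) - max 0 (onesv \<bullet> y)) *\<^sub>R ((R - mat \<alpha>) *v p)"
    by (simp add: drift_def matrix_vector_mult_diff_distrib algebra_simps scaleR_diff_left)
  have m: "\<bar>max 0 (onesv \<bullet> x) - max 0 (onesv \<bullet> y)\<bar> \<le> \<bar>onesv \<bullet> (x - y)\<bar>"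
    by (simp add: inner_diff_right max_def abs_if)
  have "norm ((max 0 (onesv \<bullet> x) - max 0 (onesv \<bullet> y)) *\<^sub>R ((R - mat \<alpha>) *v p))
      \<le> \<bar>onesv \<bullet> (x - y)\<bar> * norm ((R - mat \<alpha>) *v p)"
    using m by (simp add: mult_right_mono)
  also have "\<dots> = norm (?M *v (x - y))" by (simp add: outer_mult)
  also have "\<dots> \<le> opnorm ?M * norm (x - y)" by (rule opnorm_bound)
  finally have 2: "norm ((max 0 (onesv \<bullet> x) - max 0 (onesv \<bullet> y)) *\<^sub>R ((R - mat \<alpha>) *v p)) \<le> opnorm ?M * norm (x - y)" .
  have 1: "norm (- (R *v (x - y))) \<le> opnorm R * norm (x - y)"
    using opnorm_bound[of R "x - y"] by simp
  show ?thesis unfolding eq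
    using norm_triangle_le[OF add_mono[OF 1 2]] by (simp add: algebra_simps)
qed

lemma pos_integral:
  fixes G :: "real^'n \<Rightarrow> real"
  assumes Gm[measurable]: "G \<in> borel_measurable borel" and G01: "\<forall>z. 0 \<le> G z \<and> G z \<le> 1"
    and \<rho>: "\<rho> > 0" and pos: "\<forall>z\<in>ball z0 \<rho>. G z > 0"
  shows "(\<integral>z. G z \<partial>std_gauss) > 0"
proof -
  have e: "(\<integral>z. G z \<partial>std_gauss) = (\<integral>u. gdens u * G u \<partial>lborel)"
    unfolding std_gauss_eq
    by (subst integral_density) (auto simp: less_imp_le[OF gdens_pos])
  have int: "integrable lborel (\<lambda>u. gdens u * G u)"
  proof (rule Bochner_Integration.integrable_bound[where f="gdens"])
    show "integrable lborel gdens" by (rule integrable_gdens)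
    show "(\<lambda>u. gdens u * G u) \<in> borel_measurable lborel" by measurable
    show "AE x in lborel. norm (gdens x * G x) \<le> norm (gdens x)"
      using G01 gdens_pos by (auto simp: abs_mult intro!: mult_left_le)
  qed
  have nn: "AE u in lborel. 0 \<le> gdens u * G u"
    by (rule AE_I2) (simp add: G01 less_imp_le[OF gdens_pos])
  have ge: "(\<integral>u. gdens u * G u \<partial>lborel) \<ge> 0"
    using nn by (intro integral_nonneg_AE) auto
  show ?thesis
  proof (rule ccontr)
    assume "\<not> ?thesis"
    then have "(\<integral>u. gdens u * G u \<partial>lborel) = 0" using ge e by simp
    then have "AE u in lborel. gdens u * G u = 0"
      using integral_nonneg_eq_0_iff_AE[OF int nn] by simp
    then have "AE u in lborel. u \<notin> ball z0 \<rho>"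
      proof eventually_elim
      fix u assume "gdens u * G u = 0"
      then show "u \<notin> ball z0 \<rho>" using pos gdens_pos[of u] by (metis less_irrefl mult_pos_pos)
    qed
    then have "emeasure lborel (ball z0 \<rho>) = 0"
      by (subst (asm) AE_iff_measurable[of "ball z0 \<rho>"]) auto
    then have "measure lborel (ball z0 \<rho>) = 0" by (simp add: measure_def)
    then show False using content_ball_pos[OF \<rho>, of z0] by simp
  qed
qed

lemma aff_meas[measurable]: "(\<lambda>z. a + c *\<^sub>R ((\<sigma>::real^'n^'m) *v z)) \<in> borel_measurable borel"
  by (intro borel_measurable_continuous_onI continuous_intros matrix_vector_mult_linear_continuous_on[THEN continuous_on_compose2]) auto


lemma EM_lip:
  fixes \<sigma> R :: "real^'n^'n"
  assumes inv: "invertible \<sigma>" and \<eta>: "\<eta> > 0"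
    and fm[measurable]: "f \<in> borel_measurable borel" and fb: "bounded (range f)"
  shows "lipschitz_on
          (supnorm f * (1 + (opnorm R + opnorm ((R - mat \<alpha>) ** outer p onesv)) * \<eta>)
             * (opnorm (matrix_inv \<sigma>))\<^sup>2 * opnorm \<sigma> * \<eta> powr (-1/2) * sqrt (real CARD('n)))
          UNIV (EM_op \<eta> \<alpha> \<beta> p R \<sigma> f)"
proof -
  define C where "C = opnorm R + opnorm ((R - mat \<alpha>) ** outer p onesv)"
  define S where "S = matrix_inv \<sigma>"
  define B where "B = supnorm f"
  define mm where "mm x = x + \<eta> *\<^sub>R drift \<alpha> \<beta> p R x" for x
  have S1: "\<sigma> ** S = mat 1" and S2: "S ** \<sigma> = mat 1"
    using matrix_inv_props[OF inv] by (auto simp: S_def)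
  have C0: "C \<ge> 0" unfolding C_def by (intro add_nonneg_nonneg opnorm_nonneg)
  obtain K where K: "\<forall>x. \<bar>f x\<bar> \<le> K" using fb unfolding bounded_iff by auto
  have fB: "\<forall>y. \<bar>f y\<bar> \<le> B"
  proof
    fix y
    have "bdd_above (range (\<lambda>x. \<bar>f x\<bar>))" using K by (auto intro!: bdd_aboveI)
    then show "\<bar>f y\<bar> \<le> B" unfolding B_def supnorm_def by (rule cSUP_upper[OF UNIV_I])
  qed
  have B0: "B \<ge> 0" using fB[rule_format, of 0] by linarith
  have mm_lip: "norm (mm x - mm y) \<le> (1 + C * \<eta>) * norm (x - y)" for x y
  proof -
    have "mm x - mm y = (x - y) + \<eta> *\<^sub>R (drift \<alpha> \<beta> p R x - drift \<alpha> \<beta> p R y)"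
      by (simp add: mm_def algebra_simps)
    then have "norm (mm x - mm y) \<le> norm (x - y) + \<eta> * norm (drift \<alpha> \<beta> p R x - drift \<alpha> \<beta> p R y)"
      using norm_triangle_ineq[of "x - y" "\<eta> *\<^sub>R (drift \<alpha> \<beta> p R x - drift \<alpha> \<beta> p R y)"] \<eta> by simp
    also have "\<dots> \<le> norm (x - y) + \<eta> * (C * norm (x - y))"
      using drift_lip[of \<alpha> \<beta> p R x y] \<eta> unfolding C_def by (intro add_left_mono mult_left_mono) auto
    finally show ?thesis by (simp add: algebra_simps)
  qed
  have SS: "opnorm S \<le> (opnorm S)\<^sup>2 * opnorm \<sigma>"
  proof -
    obtain i :: 'n where True by auto
    let ?w = "axis i (1::real) :: real^'n"
    have "1 = norm (S *v (\<sigma> *v ?w))" by (simp add: matrix_vector_mul_assoc S2)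
    also have "\<dots> \<le> opnorm S * norm (\<sigma> *v ?w)" by (rule opnorm_bound)
    also have "\<dots> \<le> opnorm S * (opnorm \<sigma> * 1)"
      using opnorm_bound[of \<sigma> ?w] opnorm_nonneg[of S] by (intro mult_left_mono) auto
    finally have "1 \<le> opnorm S * opnorm \<sigma>" by simp
    then have "opnorm S * 1 \<le> opnorm S * (opnorm S * opnorm \<sigma>)"
      using opnorm_nonneg[of S] by (intro mult_left_mono) auto
    then show ?thesis by (simp add: power2_eq_square mult.assoc)
  qed
  have pw: "\<eta> powr (-1/2) = 1 / sqrt \<eta>"
  proof -
    have "\<eta> powr (-1/2) = \<eta> powr (-(1/2))" by simp
    also have "\<dots> = inverse (\<eta> powr (1/2))" by (rule powr_minus)
    also have "\<dots> = inverse (sqrt \<eta>)" using \<eta> by (simp add: powr_half_sqrt)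
    finally show ?thesis by (simp add: inverse_eq_divide)
  qed
  have sq: "sqrt \<eta> > 0" using \<eta> by simp
  show ?thesis unfolding C_def[symmetric]
  proof (rule lipschitz_onI)
    show "0 \<le> supnorm f * (1 + C * \<eta>) * (opnorm (matrix_inv \<sigma>))\<^sup>2 * opnorm \<sigma> * \<eta> powr (-1/2) * sqrt (real CARD('n))"
      using B0 C0 \<eta> opnorm_nonneg[of \<sigma>] unfolding B_def[symmetric] by (intro mult_nonneg_nonneg) auto
  next
    fix x y :: "real^'n"
    define F where "F z = f (mm y + sqrt \<eta> *\<^sub>R (\<sigma> *v z))" for z
    define d where "d = (1 / sqrt \<eta>) *\<^sub>R (S *v (mm x - mm y))"
    have Fm[measurable]: "F \<in> borel_measurable borel"
      unfolding F_def[abs_def] by measurable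
    have FB: "\<forall>z. \<bar>F z\<bar> \<le> B" using fB by (simp add: F_def)
    have shift: "f (x + \<eta> *\<^sub>R drift \<alpha> \<beta> p R x + sqrt \<eta> *\<^sub>R (\<sigma> *v z)) = F (z + d)" for z
    proof -
      have "\<sigma> *v d = (1 / sqrt \<eta>) *\<^sub>R (mm x - mm y)"
        by (simp add: d_def matrix_vector_mult_scaleR matrix_vector_mul_assoc S1)
      then have "mm y + sqrt \<eta> *\<^sub>R (\<sigma> *v (z + d)) = mm x + sqrt \<eta> *\<^sub>R (\<sigma> *v z)"
        using sq by (simp add: matrix_vector_right_distrib scaleR_add_right)
      then show ?thesis by (simp add: F_def mm_def)
    qed
    have ex: "EM_op \<eta> \<alpha> \<beta> p R \<sigma> f x = (\<integral>z. F (z + d) \<partial>std_gauss)"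
      unfolding EM_op_def using shift by simp
    have ey: "EM_op \<eta> \<alpha> \<beta> p R \<sigma> f y = (\<integral>z. F z \<partial>std_gauss)"
      unfolding EM_op_def F_def mm_def by simp
    have nd: "norm d \<le> (1 / sqrt \<eta>) * opnorm S * ((1 + C * \<eta>) * norm (x - y))"
    proof -
      have "norm d = (1 / sqrt \<eta>) * norm (S *v (mm x - mm y))" using sq by (simp add: d_def)
      also have "\<dots> \<le> (1 / sqrt \<eta>) * (opnorm S * norm (mm x - mm y))"
        using sq opnorm_bound by (intro mult_left_mono) auto
      also have "\<dots> \<le> (1 / sqrt \<eta>) * (opnorm S * ((1 + C * \<eta>) * norm (x - y)))"
        using sq opnorm_nonneg[of S] mm_lip by (intro mult_left_mono) auto
      finally show ?thesis by (simp add: mult.assoc)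
    qed
    define Q where "Q = B * sqrt (real CARD('n)) * (1 / sqrt \<eta>) * (1 + C * \<eta>) * norm (x - y)"
    have Q0: "Q \<ge> 0" unfolding Q_def using B0 C0 \<eta> by (intro mult_nonneg_nonneg) auto
    have "dist (EM_op \<eta> \<alpha> \<beta> p R \<sigma> f x) (EM_op \<eta> \<alpha> \<beta> p R \<sigma> f y)
        = \<bar>(\<integral>z. F (z + d) \<partial>std_gauss) - (\<integral>z. F z \<partial>std_gauss)\<bar>"
      by (simp add: ex ey dist_real_def)
    also have "\<dots> \<le> B * sqrt (real CARD('n)) * norm d" by (rule LipG[OF Fm FB])
    also have "\<dots> \<le> B * sqrt (real CARD('n)) * ((1 / sqrt \<eta>) * opnorm S * ((1 + C * \<eta>) * norm (x - y)))"
      using B0 nd by (intro mult_left_mono) auto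
    also have "\<dots> = Q * opnorm S" by (simp add: Q_def algebra_simps add_divide_distrib)
    also have "\<dots> \<le> Q * ((opnorm S)\<^sup>2 * opnorm \<sigma>)" using mult_left_mono[OF SS Q0] .
    also have "\<dots> = supnorm f * (1 + C * \<eta>) * (opnorm (matrix_inv \<sigma>))\<^sup>2 * opnorm \<sigma> * \<eta> powr (-1/2) * sqrt (real CARD('n)) * dist x y"
      unfolding pw by (simp add: Q_def B_def S_def dist_norm algebra_simps add_divide_distrib)
    finally show "dist (EM_op \<eta> \<alpha> \<beta> p R \<sigma> f x) (EM_op \<eta> \<alpha> \<beta> p R \<sigma> f y)
        \<le> supnorm f * (1 + C * \<eta>) * (opnorm (matrix_inv \<sigma>))\<^sup>2 * opnorm \<sigma> * \<eta> powr (-1/2) * sqrt (real CARD('n)) * dist x y" .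
  qed
qed


lemma EM_props:
  fixes \<sigma> R :: "real^'n^'n"
  assumes inv: "invertible \<sigma>" and \<eta>: "\<eta> > 0"
    and hm[measurable]: "h \<in> borel_measurable borel" and h01: "\<forall>z. 0 \<le> h z \<and> h z \<le> 1"
  shows "EM_op \<eta> \<alpha> \<beta> p R \<sigma> h \<in> borel_measurable borel"
    and "\<forall>x. 0 \<le> EM_op \<eta> \<alpha> \<beta> p R \<sigma> h x \<and> EM_op \<eta> \<alpha> \<beta> p R \<sigma> h x \<le> 1"
proof -
  interpret G: prob_space "std_gauss :: (real^'n) measure" by (rule prob_space_std_gauss)
  have "bounded (range h)" unfolding bounded_iff using h01 by (intro exI[of _ 1]) auto
  from EM_lip[OF inv \<eta> hm this, of R \<alpha> p \<beta>]
  show "EM_op \<eta> \<alpha> \<beta> p R \<sigma> h \<in> borel_measurable borel"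
    by (intro borel_measurable_continuous_onI lipschitz_on_continuous_on)
  show "\<forall>x. 0 \<le> EM_op \<eta> \<alpha> \<beta> p R \<sigma> h x \<and> EM_op \<eta> \<alpha> \<beta> p R \<sigma> h x \<le> 1"
  proof
    fix x
    let ?G = "\<lambda>z. h (x + \<eta> *\<^sub>R drift \<alpha> \<beta> p R x + sqrt \<eta> *\<^sub>R (\<sigma> *v z))"
    have Gm: "?G \<in> borel_measurable std_gauss" unfolding std_gauss_eq by measurable
    have Gi: "integrable std_gauss ?G"
      by (rule G.integrable_const_bound[where B=1]) (use h01 Gm in auto)
    have "0 \<le> (\<integral>z. ?G z \<partial>std_gauss)" by (rule integral_nonneg_AE) (use h01 in auto)
    moreover have "(\<integral>z. ?G z \<partial>std_gauss) \<le> 1" by (rule G.integral_le_const[OF Gi]) (use h01 in auto)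
    ultimately show "0 \<le> EM_op \<eta> \<alpha> \<beta> p R \<sigma> h x \<and> EM_op \<eta> \<alpha> \<beta> p R \<sigma> h x \<le> 1"
      unfolding EM_op_def by simp
  qed
qed

lemma EM_pos:
  fixes \<sigma> R :: "real^'n^'n"
  assumes hm[measurable]: "h \<in> borel_measurable borel" and h01: "\<forall>z. 0 \<le> h z \<and> h z \<le> 1"
    and \<rho>: "\<rho> > 0"
    and pos: "\<forall>z\<in>ball z0 \<rho>. h (x + \<eta> *\<^sub>R drift \<alpha> \<beta> p R x + sqrt \<eta> *\<^sub>R (\<sigma> *v z)) > 0"
  shows "EM_op \<eta> \<alpha> \<beta> p R \<sigma> h x > 0"
  unfolding EM_op_def
  by (rule pos_integral[OF _ _ \<rho> pos]) (use h01 in auto)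


theorem lemmaA2:
  fixes \<alpha> \<beta> ca2 :: real
    and p v :: "real^'n"
    and P \<sigma> :: "real^'n^'n"
  assumes alpha_pos: "\<alpha> > 0"
    and p_nonneg: "\<forall>i. p $ i \<ge> 0"
    and p_sum: "(\<Sum>i\<in>UNIV. p $ i) = 1"
    and v_pos: "\<forall>i. v $ i > 0"
    and P_nonneg: "\<forall>i j. P $ i $ j \<ge> 0"
    and P_substoch: "\<forall>i. (\<Sum>j\<in>UNIV. P $ i $ j) \<le> 1"
    and P_diag: "\<forall>i. P $ i $ i = 0"
    and IP_inv: "invertible (mat 1 - P)"
    and R_norm: "onesv \<bullet> (matrix_inv (Rmat P v) *v p) = 1"
    and ca2_pos: "ca2 > 0"
    and sigma_cov: "\<sigma> ** transpose \<sigma> =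
        ca2 *\<^sub>R diagm p + H0 p
        + (\<Sum>k\<in>UNIV. ((matrix_inv (Rmat P v) *v p) $ k * v $ k) *\<^sub>R Hk P k)
        + (mat 1 - transpose P) ** diagm v ** diagm (matrix_inv (Rmat P v) *v p) ** (mat 1 - P)"
    and sigma_pd: "\<exists>c>0. \<forall>\<xi>. \<xi> \<bullet> ((\<sigma> ** transpose \<sigma>) *v \<xi>) \<ge> c * (\<xi> \<bullet> \<xi>)"
  shows
    "(\<forall>\<eta>>0. \<forall>f :: real^'n \<Rightarrow> real. f \<in> borel_measurable borel \<and> bounded (range f) \<longrightarrow>
        lipschitz_on
          (supnorm f * (1 + (opnorm (Rmat P v) + opnorm ((Rmat P v - mat \<alpha>) ** outer p onesv)) * \<eta>)
             * (opnorm (matrix_inv \<sigma>))\<^sup>2 * opnorm \<sigma> * \<eta> powr (-1/2) * sqrt (real CARD('n)))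
          UNIV (EM_op \<eta> \<alpha> \<beta> p (Rmat P v) \<sigma> f)
        \<and> continuous_on UNIV (EM_op \<eta> \<alpha> \<beta> p (Rmat P v) \<sigma> f))
     \<and> (\<forall>\<eta>>0. \<forall>x y :: real^'n. \<forall>r>0. \<forall>k::nat. k \<ge> 1 \<longrightarrow>
        ((EM_op \<eta> \<alpha> \<beta> p (Rmat P v) \<sigma> ^^ k) (indicator (cball y r))) x > 0)"
proof -
  have inv: "invertible \<sigma>" by (rule pd_invertible[OF sigma_pd])
  define S where "S = matrix_inv \<sigma>"
  have S1: "\<sigma> ** S = mat 1" using matrix_inv_props[OF inv] by (simp add: S_def)
  show ?thesis
  proof (intro conjI allI impI)
    fix \<eta> :: real and f :: "real^'n \<Rightarrow> real"
    assume \<eta>: "\<eta> > 0" and f: "f \<in> borel_measurable borel \<and> bounded (range f)"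
    have L: "lipschitz_on
          (supnorm f * (1 + (opnorm (Rmat P v) + opnorm ((Rmat P v - mat \<alpha>) ** outer p onesv)) * \<eta>)
             * (opnorm (matrix_inv \<sigma>))\<^sup>2 * opnorm \<sigma> * \<eta> powr (-1/2) * sqrt (real CARD('n)))
          UNIV (EM_op \<eta> \<alpha> \<beta> p (Rmat P v) \<sigma> f)"
      using EM_lip[OF inv \<eta>] f by blast
    then show "lipschitz_on
          (supnorm f * (1 + (opnorm (Rmat P v) + opnorm ((Rmat P v - mat \<alpha>) ** outer p onesv)) * \<eta>)
             * (opnorm (matrix_inv \<sigma>))\<^sup>2 * opnorm \<sigma> * \<eta> powr (-1/2) * sqrt (real CARD('n)))
          UNIV (EM_op \<eta> \<alpha> \<beta> p (Rmat P v) \<sigma> f)" .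
    show "continuous_on UNIV (EM_op \<eta> \<alpha> \<beta> p (Rmat P v) \<sigma> f)"
      using L by (rule lipschitz_on_continuous_on)
  next
    fix \<eta> r :: real and x y :: "real^'n" and k :: nat
    assume \<eta>: "\<eta> > 0" and r: "r > 0" and k: "k \<ge> 1"
    let ?T = "EM_op \<eta> \<alpha> \<beta> p (Rmat P v) \<sigma>"
    let ?I = "indicator (cball y r) :: real^'n \<Rightarrow> real"
    have sq: "sqrt \<eta> > 0" using \<eta> by simp
    have Im: "?I \<in> borel_measurable borel" by (intro borel_measurable_indicator) simp
    have I01: "\<forall>z. 0 \<le> ?I z \<and> ?I z \<le> 1" by (auto simp: indicator_def)
    have base: "?T ?I x' > 0" for x'
    proof -
      define mx where "mx = x' + \<eta> *\<^sub>R drift \<alpha> \<beta> p (Rmat P v) x'"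
      define z0 where "z0 = (1 / sqrt \<eta>) *\<^sub>R (S *v (y - mx))"
      define \<rho> where "\<rho> = r / (sqrt \<eta> * (opnorm \<sigma> + 1))"
      have on: "opnorm \<sigma> \<ge> 0" by (rule opnorm_nonneg)
      have \<rho>0: "\<rho> > 0" unfolding \<rho>_def using r sq on by (intro divide_pos_pos mult_pos_pos) auto
      have z0: "sqrt \<eta> *\<^sub>R (\<sigma> *v z0) = y - mx"
        using sq by (simp add: z0_def matrix_vector_mult_scaleR matrix_vector_mul_assoc S1)
      show ?thesis
      proof (rule EM_pos[OF Im I01 \<rho>0, of z0])
        show "\<forall>z\<in>ball z0 \<rho>. 0 < ?I (x' + \<eta> *\<^sub>R drift \<alpha> \<beta> p (Rmat P v) x' + sqrt \<eta> *\<^sub>R (\<sigma> *v z))"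
        proof
          fix z assume z: "z \<in> ball z0 \<rho>"
          have "mx + sqrt \<eta> *\<^sub>R (\<sigma> *v z) - y = sqrt \<eta> *\<^sub>R (\<sigma> *v (z - z0))"
            using z0 by (simp add: matrix_vector_mult_diff_distrib scaleR_diff_right algebra_simps)
          then have "dist y (mx + sqrt \<eta> *\<^sub>R (\<sigma> *v z)) = norm (sqrt \<eta> *\<^sub>R (\<sigma> *v (z - z0)))"
            by (metis dist_commute dist_norm)
          also have "\<dots> = sqrt \<eta> * norm (\<sigma> *v (z - z0))" using sq by simp
          also have "\<dots> \<le> sqrt \<eta> * (opnorm \<sigma> * norm (z - z0))"
            using sq by (intro mult_left_mono opnorm_bound) auto
          also have "\<dots> \<le> sqrt \<eta> * ((opnorm \<sigma> + 1) * \<rho>)"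
          proof -
            have "norm (z - z0) < \<rho>" using z by (simp add: dist_norm norm_minus_commute)
            then have "opnorm \<sigma> * norm (z - z0) \<le> (opnorm \<sigma> + 1) * \<rho>"
              using on by (intro mult_mono) auto
            then show ?thesis using sq by (intro mult_left_mono) auto
          qed
          also have "\<dots> = r"
          proof -
            have "sqrt \<eta> + opnorm \<sigma> * sqrt \<eta> > 0" using sq on by (simp add: add_pos_nonneg)
            then show ?thesis unfolding \<rho>_def by (simp add: field_simps)
          qed
          finally have "mx + sqrt \<eta> *\<^sub>R (\<sigma> *v z) \<in> cball y r" by simp
          then show "0 < ?I (x' + \<eta> *\<^sub>R drift \<alpha> \<beta> p (Rmat P v) x' + sqrt \<eta> *\<^sub>R (\<sigma> *v z))"
            by (simp add: mx_def)
        qed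
      qed
    qed
    have main: "(?T ^^ Suc j) ?I \<in> borel_measurable borel \<and> (\<forall>z. 0 \<le> (?T ^^ Suc j) ?I z \<and> (?T ^^ Suc j) ?I z \<le> 1)
        \<and> (\<forall>z. (?T ^^ Suc j) ?I z > 0)" for j
    proof (induction j)
      case 0
      show ?case using EM_props[OF inv \<eta> Im I01] base by simp
    next
      case (Suc j)
      let ?h = "(?T ^^ Suc j) ?I"
      have hm: "?h \<in> borel_measurable borel" and h01: "\<forall>z. 0 \<le> ?h z \<and> ?h z \<le> 1"
        and hp: "\<forall>z. ?h z > 0" using Suc.IH by auto
      have "?T ?h z > 0" for z
        by (rule EM_pos[OF hm h01 zero_less_one, of 0]) (use hp in auto)
      then show ?case using EM_props[OF inv \<eta> hm h01]
        by (simp del: funpow.simps add: funpow_Suc_right[symmetric] funpow.simps(2))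
    qed
    obtain j where "k = Suc j" using k by (cases k) auto
    then show "((?T ^^ k) ?I) x > 0" using main[of j] by simp
  qed
qed

end
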